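(* Let $G_0,G_1\in\mathbb{Z}$, let $(G_n)_{n\ge0}$ satisfy $G_n=G_{n-1}+G_{n-2}$ for $n\ge2$, and let $\mu = G_1^2 - G_0 G_1 - G_0^2$. For every odd integer $k \geq 1$, $\mathcal{G}^2_{G_0,G_1}(k)$ divides $|2\mu|$.
   Context: $\mathcal{G}^2_{G_0,G_1}(k)=\gcd\{\sum_{i=1}^k G_{n+i}^2 : n\ge 0\}$ (nonnegative gcd of this infinite set of integers). *)

theory Defs
  imports Main
begin

fun gfib :: "int \<Rightarrow> int \<Rightarrow> nat \<Rightarrow> int" where
  "gfib a b 0 = a"
| "gfib a b (Suc 0) = b"
| "gfib a b (Suc (Suc n)) = gfib a b (Suc n) + gfib a b n"

definition gsq_gcd :: "int \<Rightarrow> int \<Rightarrow> nat \<Rightarrow> int" where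
  "gsq_gcd a b k = Gcd {(\<Sum>i=1..k. (gfib a b (n + i))^2) | n. True}"

end

theory Submission
  imports Defs
begin

lemma gfib_P:
  "(gfib a b (Suc n))^2 - gfib a b n * gfib a b (Suc n) - (gfib a b n)^2
     = (-1)^n * (b^2 - a*b - a^2)"
proof (induction n)
  case 0 then show ?case by simp
next
  case (Suc n)
  have "(gfib a b (Suc (Suc n)))^2 - gfib a b (Suc n) * gfib a b (Suc (Suc n)) - (gfib a b (Suc n))^2
      = - ((gfib a b (Suc n))^2 - gfib a b n * gfib a b (Suc n) - (gfib a b n)^2)"
    by (simp add: power2_eq_square algebra_simps)
  then show ?case using Suc by simp
qed

lemma gfib_term:
  "(gfib a b (m+2))^2 - 3*(gfib a b (m+1))^2 + (gfib a b m)^2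
     = 2 * (-1)^(m+1) * (b^2 - a*b - a^2)"
proof -
  have "(gfib a b (m+2))^2 - 3*(gfib a b (m+1))^2 + (gfib a b m)^2
     = -2 * ((gfib a b (Suc m))^2 - gfib a b m * gfib a b (Suc m) - (gfib a b m)^2)"
    by (simp add: numeral_2_eq_2 power2_eq_square algebra_simps)
  then show ?thesis by (simp add: gfib_P)
qed

lemma alt_sum: "(\<Sum>i=1..k. (-1::int)^(i+1)) = (if odd k then 1 else 0)"
  by (induction k) auto

theorem theorem4p8:
  fixes G0 G1 :: int and k :: nat
  assumes "odd k" and "k \<ge> 1"
  shows "gsq_gcd G0 G1 k dvd \<bar>2 * (G1^2 - G0 * G1 - G0^2)\<bar>"
proof -
  define S where "S n = (\<Sum>i=1..k. (gfib G0 G1 (n + i))^2)" for n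
  define A where "A = {(\<Sum>i=1..k. (gfib G0 G1 (n + i))^2) | n. True}"
  have d: "gsq_gcd G0 G1 k dvd S n" for n
    unfolding gsq_gcd_def S_def by (rule Gcd_dvd) blast
  have "S 2 - 3 * S 1 + S 0 = (\<Sum>i=1..k. (gfib G0 G1 (i+2))^2 - 3*(gfib G0 G1 (i+1))^2 + (gfib G0 G1 i)^2)"
    unfolding S_def by (simp add: sum.distrib sum_subtractf sum_distrib_left add.commute)
  also have "\<dots> = (\<Sum>i=1..k. (-1)^(i+1) * (2 * (G1^2 - G0*G1 - G0^2)))"
    by (rule sum.cong) (use gfib_term[of G0 G1] in \<open>simp_all only: mult.commute mult.assoc\<close>)
  also have "\<dots> = 2 * (G1^2 - G0*G1 - G0^2)"
    using assms(1) by (subst sum_distrib_right[symmetric]) (simp only: alt_sum not_False_eq_True if_True mult_1_left)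
  finally have eq: "S 2 - 3 * S 1 + S 0 = 2 * (G1^2 - G0*G1 - G0^2)" .
  have "gsq_gcd G0 G1 k dvd S 2 - 3 * S 1 + S 0"
    using d by (intro dvd_add dvd_diff dvd_mult) auto
  then show ?thesis using eq by simp
qed

end
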